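(* Let $\gamma\in(0,1)$, $T\ge1$, and let $Z_1,\dots,Z_T$ be i.i.d. geometric random variables with parameter $1-\gamma$, i.e. with values in $\{1,2,\dots\}$ and $\mathbb P(Z_j>i)=\gamma^i$ for all integers $i\ge0$. Then $$\mathbb E\Big[\max_{j\in[T]}\frac{Z_j}{\log(1+Z_j)}\Big]\le\frac{4+2\log T}{1-\gamma}.$$ *)

theory Defs
  imports "HOL-Probability.Probability"
begin

end

theory Submission
  imports Defs
begin

lemma geo_tail:
  fixes M :: "'a measure" and Z :: "'a \<Rightarrow> nat" and \<gamma> :: real
  assumes P: "prob_space M" and meas: "Z \<in> measurable M (count_space UNIV)"
    and g0: "0 \<le> \<gamma>" and g1: "\<gamma> < 1"
    and tail: "\<forall>i::nat. measure M {x \<in> space M. Z x > i} = \<gamma> ^ i"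
  shows "(\<integral>\<^sup>+ x. of_nat (Z x - K) \<partial>M) = ennreal (\<gamma>^K / (1 - \<gamma>))"
proof -
  have m2: "(\<lambda>x. enat (Z x - K)) \<in> measurable M (count_space UNIV)"
    using measurable_compose[OF meas, of "\<lambda>n. enat (n - K)" "count_space UNIV"] by simp
  have "(\<integral>\<^sup>+ x. of_nat (Z x - K) \<partial>M) = (\<integral>\<^sup>+ x. ennreal_of_enat (enat (Z x - K)) \<partial>M)"
    by simp
  also have "\<dots> = (\<Sum>t. emeasure M {x \<in> space M. enat t < enat (Z x - K)})"
    by (rule nn_integral_enat_function[OF m2])
  also have "\<dots> = (\<Sum>t. ennreal (\<gamma> ^ (K + t)))"
  proof (rule suminf_cong)
    fix t
    have "{x \<in> space M. enat t < enat (Z x - K)} = {x \<in> space M. Z x > K + t}" by auto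
    then show "emeasure M {x \<in> space M. enat t < enat (Z x - K)} = ennreal (\<gamma> ^ (K + t))"
      using tail finite_measure.emeasure_eq_measure[OF prob_space.finite_measure[OF P]] by simp
  qed
  also have "\<dots> = ennreal (\<gamma>^K / (1 - \<gamma>))"
  proof (rule suminf_ennreal_eq)
    show "\<And>i. 0 \<le> \<gamma> ^ (K + i)" using g0 by simp
    have "(\<lambda>n. \<gamma> ^ n) sums (1 / (1 - \<gamma>))" using geometric_sums[of \<gamma>] g0 g1 by simp
    then have "(\<lambda>n. \<gamma>^K * \<gamma> ^ n) sums (\<gamma>^K * (1 / (1 - \<gamma>)))" by (rule sums_mult)
    then show "(\<lambda>t. \<gamma> ^ (K + t)) sums (\<gamma>^K / (1 - \<gamma>))" by (simp add: power_add)
  qed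
  finally show ?thesis .
qed

lemma f_le: "real n / ln (1 + real n) \<le> 1 + real n"
proof (cases "n = 0")
  case True then show ?thesis by simp
next
  case False
  then have n1: "real n \<ge> 1" by simp
  have "ln (1 / (1 + real n)) \<le> 1 / (1 + real n) - 1" by (rule ln_le_minus_one) simp
  then have "ln (1 + real n) \<ge> real n / (1 + real n)"
    using n1 by (simp add: ln_div field_simps)
  moreover have "real n / (1 + real n) > 0" using n1 by simp
  ultimately show ?thesis using n1
    by (smt (verit) divide_le_eq_1_pos le_divide_eq mult.commute frac_le
        nonzero_mult_div_cancel_left divide_divide_eq_right)
qed


theorem mainTheorem12:
  fixes M :: "'a measure" and Z :: "nat \<Rightarrow> 'a \<Rightarrow> nat"
    and \<gamma> :: real and T :: nat
  assumes "prob_space M"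
    and "0 < \<gamma>" and "\<gamma> < 1" and "T \<ge> 1"
    and "prob_space.indep_vars M (\<lambda>_. count_space UNIV) Z {1..T}"
    and "\<forall>j\<in>{1..T}. \<forall>i::nat. measure M {x \<in> space M. Z j x > i} = \<gamma> ^ i"
  shows "prob_space.expectation M
           (\<lambda>x. Max ((\<lambda>j. real (Z j x) / ln (1 + real (Z j x))) ` {1..T}))
         \<le> (4 + 2 * ln (real T)) / (1 - \<gamma>)"
proof -
  note P = assms(1)
  interpret prob_space M by (rule P)
  have meas: "\<And>j. j \<in> {1..T} \<Longrightarrow> Z j \<in> measurable M (count_space UNIV)"
    using assms(5) unfolding indep_vars_def by auto
  define p where "p = 1 - \<gamma>"
  have p0: "0 < p" "p \<le> 1" using assms(2,3) by (auto simp: p_def)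
  define K where "K = nat \<lceil>ln (real T) / p\<rceil>"
  define g where "g x = Max ((\<lambda>j. real (Z j x) / ln (1 + real (Z j x))) ` {1..T})" for x
  define B where "B x = real (1 + K) + (\<Sum>j\<in>{1..T}. real (Z j x - K))" for x
  have lnT: "ln (real T) \<ge> 0" using assms(4) by simp
  have pw: "g x \<le> B x" for x
  proof -
    have ne: "(\<lambda>j. real (Z j x) / ln (1 + real (Z j x))) ` {1..T} \<noteq> {}" using assms(4) by auto
    obtain j where j: "j \<in> {1..T}" "g x = real (Z j x) / ln (1 + real (Z j x))"
      using Max_in[OF _ ne] unfolding g_def by auto
    have "g x \<le> 1 + real (Z j x)" using j f_le by simp
    also have "\<dots> \<le> real (1 + K) + real (Z j x - K)" by simp
    also have "real (Z j x - K) \<le> (\<Sum>j\<in>{1..T}. real (Z j x - K))"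
      by (rule member_le_sum) (use j in auto)
    then have "real (1 + K) + real (Z j x - K) \<le> B x" unfolding B_def by simp
    finally show ?thesis .
  qed
  have int_eq: "(\<integral>\<^sup>+ x. ennreal (B x) \<partial>M) = ennreal (real (1 + K) + real T * (\<gamma>^K / (1 - \<gamma>)))"
  proof -
    have "(\<integral>\<^sup>+ x. ennreal (B x) \<partial>M) = (\<integral>\<^sup>+ x. ennreal (real (1 + K)) + (\<Sum>j\<in>{1..T}. of_nat (Z j x - K)) \<partial>M)"
    proof (rule nn_integral_cong)
      fix x
      have "ennreal (B x) = ennreal (real (1 + K)) + ennreal (\<Sum>j\<in>{1..T}. real (Z j x - K))"
        unfolding B_def by (rule ennreal_plus) (auto intro: sum_nonneg)
      also have "ennreal (\<Sum>j\<in>{1..T}. real (Z j x - K)) = (\<Sum>j\<in>{1..T}. ennreal (real (Z j x - K)))"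
        by (rule sum_ennreal[symmetric]) simp
      also have "\<dots> = (\<Sum>j\<in>{1..T}. of_nat (Z j x - K))"
        by (simp only: ennreal_of_nat_eq_real_of_nat)
      finally show "ennreal (B x) = ennreal (real (1 + K)) + (\<Sum>j\<in>{1..T}. of_nat (Z j x - K))" .
    qed
    also have "\<dots> = (\<integral>\<^sup>+ x. ennreal (real (1 + K)) \<partial>M) + (\<integral>\<^sup>+ x. (\<Sum>j\<in>{1..T}. of_nat (Z j x - K)) \<partial>M)"
    proof (rule nn_integral_add)
      show "(\<lambda>x. \<Sum>j\<in>{1..T}. of_nat (Z j x - K) :: ennreal) \<in> borel_measurable M"
      proof (rule borel_measurable_sum)
        fix j assume "j \<in> {1..T}"
        then show "(\<lambda>x. of_nat (Z j x - K) :: ennreal) \<in> borel_measurable M"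
          using measurable_compose[OF meas, of j "\<lambda>n. of_nat (n - K) :: ennreal" borel] by simp
      qed
    qed simp
    also have "(\<integral>\<^sup>+ x. (\<Sum>j\<in>{1..T}. of_nat (Z j x - K)) \<partial>M) = (\<Sum>j\<in>{1..T}. \<integral>\<^sup>+ x. of_nat (Z j x - K) \<partial>M)"
    proof (rule nn_integral_sum)
      fix j assume "j \<in> {1..T}"
      then show "(\<lambda>x. of_nat (Z j x - K) :: ennreal) \<in> borel_measurable M"
        using measurable_compose[OF meas, of j "\<lambda>n. of_nat (n - K) :: ennreal" borel] by simp
    qed
    also have "\<dots> = (\<Sum>j\<in>{1..T}. ennreal (\<gamma>^K / (1 - \<gamma>)))"
    proof (rule sum.cong)
      fix j assume j: "j \<in> {1..T}"
      show "(\<integral>\<^sup>+ x. of_nat (Z j x - K) \<partial>M) = ennreal (\<gamma>^K / (1 - \<gamma>))"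
        by (rule geo_tail[OF P meas[OF j]]) (use assms(2,3,6) j in auto)
    qed simp
    also have "\<dots> = of_nat T * ennreal (\<gamma>^K / (1 - \<gamma>))" by simp
    also have "\<dots> = ennreal (real T * (\<gamma>^K / (1 - \<gamma>)))"
      by (subst ennreal_mult) (use assms(2,3) in \<open>auto simp: ennreal_of_nat_eq_real_of_nat\<close>)
    finally show ?thesis
      using assms(2,3) emeasure_space_1 by (simp add: ennreal_plus[symmetric] del: of_nat_add)
  qed
  have bound: "real (1 + K) + real T * (\<gamma>^K / (1 - \<gamma>)) \<le> (4 + 2 * ln (real T)) / (1 - \<gamma>)"
  proof -
    have Kle: "real K \<le> ln (real T) / p + 1"
      unfolding K_def using lnT p0 by (simp add: of_nat_nat)
    have nn: "0 \<le> ln (real T) / p" using lnT p0 by simp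
    have Kge: "real K \<ge> ln (real T) / p" unfolding K_def
      using nn le_of_int_ceiling[of "ln (real T) / p"] by (simp add: of_nat_nat)
    have "\<gamma> \<le> exp (- p)" using exp_ge_add_one_self[of "-p"] by (simp add: p_def)
    then have "\<gamma>^K \<le> exp (- p) ^ K" using assms(2) by (simp add: power_mono)
    also have "\<dots> = exp (- (p * real K))" using exp_of_nat2_mult[of "-p" K] by simp
    also have "\<dots> \<le> exp (- ln (real T))"
      using Kge p0 by (simp add: field_simps)
    also have "\<dots> = 1 / real T" using assms(4) by (simp add: exp_minus inverse_eq_divide)
    finally have "real T * \<gamma>^K \<le> 1" using assms(4) by (simp add: field_simps)
    then have "real T * (\<gamma>^K / (1 - \<gamma>)) \<le> 1 / p" using p0 by (simp add: p_def divide_right_mono)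
    moreover have "1 \<le> 1 / p" using p0 by simp
    moreover have "ln (real T) / p \<le> 2 * ln (real T) / p" using lnT p0 by (simp add: divide_right_mono)
    ultimately have "real (1 + K) + real T * (\<gamma>^K / (1 - \<gamma>)) \<le> 4 / p + 2 * ln (real T) / p"
      using Kle by simp
    then show ?thesis by (simp add: p_def add_divide_distrib)
  qed
  have "(\<integral>\<^sup>+ x. ennreal (g x) \<partial>M) \<le> (\<integral>\<^sup>+ x. ennreal (B x) \<partial>M)"
    by (rule nn_integral_mono) (simp add: pw ennreal_leI)
  also have "\<dots> \<le> ennreal ((4 + 2 * ln (real T)) / (1 - \<gamma>))"
    unfolding int_eq using bound by (rule ennreal_leI)
  finally have "integral\<^sup>L M g \<le> (4 + 2 * ln (real T)) / (1 - \<gamma>)"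
    by (intro integral_real_bounded) (use lnT assms(3) in auto)
  then show ?thesis unfolding g_def .
qed

end
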